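(* Let $n_0\ge2$ be an integer, $s\in\mathbb{C}$ with $\sigma=\operatorname{Re}s>2$, and $\mathcal{D}_{n_0}\in\{\mathcal{X}_{n_0},\mathcal{Y}_{n_0},\mathcal{Z}_{n_0}\}$. Then $$|\mathcal{D}_{n_0}(s)|\le\frac{2(n_0-1)^{2-\sigma}}{\sigma-2}.$$
   Context: Pascal's rhombus consists of integers $r_{i,j}$ for $i\ge0$, $j\in\mathbb{Z}$, with $r_{0,j}=0$ for all $j$, $r_{1,0}=1$, $r_{1,j}=0$ for $j\ne0$, and $r_{i,j}=r_{i-1,j-1}+r_{i-1,j}+r_{i-1,j+1}+r_{i-2,j}$ for $i\ge2$. For $n\ge1$: $x(n)$ is the number of $j$ with $r_{n,j}$ odd; $y(n)$ the number of $j$ with $r_{2n-1,2j}$ odd; $z(n)$ the number of $j$ with $r_{2n,2j-1}$ odd. $\mathcal{X}_{n_0}(s)=\sum_{n\ge n_0}x(n)n^{-s}$, $\mathcal{Y}_{n_0}(s)=\sum_{n\ge n_0}y(n)n^{-s}$, $\mathcal{Z}_{n_0}(s)=\sum_{n\ge n_0}z(n)n^{-s}$. *)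

theory Defs
  imports "HOL-Analysis.Analysis"
begin

fun rhombus :: "nat \<Rightarrow> int \<Rightarrow> int" where
  "rhombus 0 j = 0"
| "rhombus (Suc 0) j = (if j = 0 then 1 else 0)"
| "rhombus (Suc (Suc i)) j =
     rhombus (Suc i) (j - 1) + rhombus (Suc i) j + rhombus (Suc i) (j + 1) + rhombus i j"

definition xcount :: "nat \<Rightarrow> nat" where
  "xcount n = card {j. odd (rhombus n j)}"

definition ycount :: "nat \<Rightarrow> nat" where
  "ycount n = card {j. odd (rhombus (2 * n - 1) (2 * j))}"

definition zcount :: "nat \<Rightarrow> nat" where
  "zcount n = card {j. odd (rhombus (2 * n) (2 * j - 1))}"

definition dser :: "(nat \<Rightarrow> nat) \<Rightarrow> nat \<Rightarrow> complex \<Rightarrow> complex" where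
  "dser d n0 s = (\<Sum>n. of_nat (d (n + n0)) * (of_nat (n + n0)) powr (- s))"

end

theory Submission
  imports Defs
begin

lemma rhombus_zero: "\<bar>j\<bar> \<ge> int i \<Longrightarrow> rhombus i j = 0"
  by (induction i j rule: rhombus.induct) auto

lemma card_le_sub: "finite B \<Longrightarrow> A \<subseteq> B \<Longrightarrow> card A \<le> card B"
  by (rule card_mono)

lemma dbound:
  assumes "n \<ge> 1" "d \<in> {xcount, ycount, zcount}"
  shows "d n \<le> 2 * n"
proof -
  have x: "xcount n \<le> 2 * n"
  proof -
    have "{j. odd (rhombus n j)} \<subseteq> {-(int n)+1..int n - 1}"
    proof
      fix j assume "j \<in> {j. odd (rhombus n j)}"
      then have "rhombus n j \<noteq> 0" by auto
      then have "\<bar>j\<bar> < int n" using rhombus_zero by force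
      then show "j \<in> {-(int n)+1..int n - 1}" by auto
    qed
    then have "xcount n \<le> card {-(int n)+1..int n - 1}"
      unfolding xcount_def by (intro card_mono) auto
    then show ?thesis using assms(1) by simp
  qed
  have y: "ycount n \<le> 2 * n"
  proof -
    have "{j. odd (rhombus (2*n-1) (2*j))} \<subseteq> {-(int n)+1..int n - 1}"
    proof
      fix j assume "j \<in> {j. odd (rhombus (2*n-1) (2*j))}"
      then have "rhombus (2*n-1) (2*j) \<noteq> 0" by auto
      then have "\<bar>2*j\<bar> < int (2*n-1)" using rhombus_zero by force
      then show "j \<in> {-(int n)+1..int n - 1}" using assms(1) by auto
    qed
    then have "ycount n \<le> card {-(int n)+1..int n - 1}"
      unfolding ycount_def by (intro card_mono) auto
    then show ?thesis using assms(1) by simp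
  qed
  have z: "zcount n \<le> 2 * n"
  proof -
    have "{j. odd (rhombus (2*n) (2*j-1))} \<subseteq> {-(int n)+1..int n}"
    proof
      fix j assume "j \<in> {j. odd (rhombus (2*n) (2*j-1))}"
      then have "rhombus (2*n) (2*j-1) \<noteq> 0" by auto
      then have "\<bar>2*j-1\<bar> < int (2*n)" using rhombus_zero by force
      then show "j \<in> {-(int n)+1..int n}" using assms(1) by auto
    qed
    then have "zcount n \<le> card {-(int n)+1..int n}"
      unfolding zcount_def by (intro card_mono) auto
    then show ?thesis using assms(1) by simp
  qed
  show ?thesis using assms(2) x y z by auto
qed

lemma key_ineq:
  fixes m a :: real
  assumes "m \<ge> 2" "a < 0"
  shows "m powr (a - 1) \<le> ((m - 1) powr a - m powr a) / (- a)"
proof -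
  have "\<exists>z::real. m - 1 < z \<and> z < m \<and> (m powr a - (m-1) powr a = (m - (m-1)) * (a * z powr (a - 1)))"
    apply (rule MVT2[where f="\<lambda>x. x powr a"])
     apply simp
    apply (rule has_real_derivative_powr)
    using assms by simp
  then obtain z where z: "m - 1 < z" "z < m" "m powr a - (m-1) powr a = a * z powr (a - 1)"
    by auto
  have "m powr (a - 1) \<le> z powr (a - 1)"
    using z assms by (intro powr_mono2') auto
  then have "-a * m powr (a - 1) \<le> -a * z powr (a - 1)"
    using assms by (intro mult_left_mono) auto
  then have "-a * m powr (a - 1) \<le> (m - 1) powr a - m powr a"
    using z(3) by simp
  then show ?thesis using assms by (simp add: field_simps)
qed

theorem lemmaI3:
  fixes n0 :: nat and s :: complex and d :: "nat \<Rightarrow> nat"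
  assumes "n0 \<ge> 2" and "Re s > 2" and "d \<in> {xcount, ycount, zcount}"
  shows "cmod (dser d n0 s) \<le> 2 * (real n0 - 1) powr (2 - Re s) / (Re s - 2)"
proof -
  define a where "a = 2 - Re s"
  have a: "a < 0" using assms(2) a_def by simp
  define F where "F k = (real (k + n0) - 1) powr a" for k
  define g where "g k = 2 * (F k - F (Suc k)) / (Re s - 2)" for k
  define t where "t k = of_nat (d (k + n0)) * (of_nat (k + n0) :: complex) powr (- s)" for k
  have F0: "F \<longlonglongrightarrow> 0"
  proof -
    have "filterlim (\<lambda>k. (real n0 - 1) + real k) at_top sequentially"
      by (rule filterlim_tendsto_add_at_top[OF tendsto_const filterlim_real_sequentially])
    then have "filterlim (\<lambda>k. real (k + n0) - 1) at_top sequentially"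
      by (simp add: algebra_simps)
    then show ?thesis unfolding F_def using a by (intro tendsto_neg_powr) auto
  qed
  have gs: "g sums (2 * (F 0 - 0) / (Re s - 2))"
    unfolding g_def
    by (intro sums_divide sums_mult telescope_sums' F0)
  have tb: "norm (t k) \<le> g k" for k
  proof -
    define m where "m = real (k + n0)"
    have m2: "m \<ge> 2" using assms(1) m_def by simp
    have "norm (t k) = real (d (k + n0)) * m powr (- Re s)"
      unfolding t_def m_def by (simp add: norm_mult norm_powr_real_powr)
    also have "\<dots> \<le> (2 * m) * m powr (- Re s)"
      using dbound[OF _ assms(3), of "k + n0"] assms(1) m_def
      by (intro mult_right_mono) auto
    also have "\<dots> = 2 * m powr (a - 1)"
      using m2 by (simp add: a_def powr_add[symmetric] powr_diff powr_minus field_simps)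
    also have "\<dots> \<le> 2 * (((m - 1) powr a - m powr a) / (- a))"
      using key_ineq[OF m2 a] by linarith
    also have "\<dots> = g k"
      unfolding g_def F_def m_def a_def by (simp add: field_simps)
    finally show ?thesis .
  qed
  have sg: "summable g" using gs by (rule sums_summable)
  have sn: "summable (\<lambda>k. norm (t k))"
    by (rule summable_comparison_test[OF _ sg]) (use tb in auto)
  have "cmod (dser d n0 s) = norm (suminf t)"
    unfolding dser_def t_def by simp
  also have "\<dots> \<le> (\<Sum>k. norm (t k))" by (rule summable_norm[OF sn])
  also have "\<dots> \<le> suminf g" by (rule suminf_le[OF tb sn sg])
  also have "\<dots> = 2 * F 0 / (Re s - 2)" using gs by (simp add: sums_iff)
  also have "\<dots> = 2 * (real n0 - 1) powr (2 - Re s) / (Re s - 2)"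
    unfolding F_def a_def by simp
  finally show ?thesis .
qed

end
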